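(* Let $m,n_1,n_2\in\mathbb N$ and $M\in{\rm Mat}_m(\mathbb Z)$. Then $\Gamma_{M,\,n_1}$ embeds in $\Gamma_{M,\,n_1n_2}$ as an induced subgraph; that is, there is an injective map $f:V(\Gamma_{M,\,n_1})\to V(\Gamma_{M,\,n_1n_2})$ such that for all ${\bf x},{\bf y}$, $({\bf x},{\bf y})$ is an arc of $\Gamma_{M,\,n_1}$ if and only if $(f({\bf x}),f({\bf y}))$ is an arc of $\Gamma_{M,\,n_1n_2}$.
   Context: $\mathbb N$ is the set of positive integers and $\mathbb Z_n$ the integers modulo $n$. For $M\in{\rm Mat}_m(\mathbb Z)$, the move graph $\Gamma_{M,\,n}$ is the directed graph with vertex set $\mathbb Z_n^m$ and arc set $\{({\bf x},{\bf y}) : {\bf y}^T=M{\bf x}^T \text{ in } \mathbb Z_n^m\}$ (loops allowed). *)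

theory Defs
  imports Main
begin

text \<open>Vertices of the move graph Gamma_{M,n}: elements of (Z_n)^m, represented as
  functions nat => int with x i in {0..<n} for i < m and x i = 0 for i >= m.\<close>
definition mg_vertices :: "nat \<Rightarrow> nat \<Rightarrow> (nat \<Rightarrow> int) set" where
  "mg_vertices m n = {x. (\<forall>i<m. 0 \<le> x i \<and> x i < int n) \<and> (\<forall>i\<ge>m. x i = 0)}"

definition mg_arc :: "nat \<Rightarrow> (nat \<Rightarrow> nat \<Rightarrow> int) \<Rightarrow> nat \<Rightarrow> (nat \<Rightarrow> int) \<Rightarrow> (nat \<Rightarrow> int) \<Rightarrow> bool" where
  "mg_arc m M n x y \<longleftrightarrow> x \<in> mg_vertices m n \<and> y \<in> mg_vertices m n \<and>
     (\<forall>i<m. y i mod int n = (\<Sum>j<m. M i j * x j) mod int n)"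

end

theory Submission
  imports Defs
begin

lemma key:
  fixes a b :: int and n1 n2 :: nat
  assumes "n2 \<ge> 1"
  shows "(int n2 * a) mod int (n1 * n2) = (int n2 * b) mod int (n1 * n2) \<longleftrightarrow> a mod int n1 = b mod int n1"
proof -
  have e: "int (n1 * n2) = int n2 * int n1" by simp
  have "(int n2 * a) mod int (n1 * n2) = int n2 * (a mod int n1)"
    unfolding e by (rule mult_mod_right[symmetric])
  moreover have "(int n2 * b) mod int (n1 * n2) = int n2 * (b mod int n1)"
    unfolding e by (rule mult_mod_right[symmetric])
  ultimately show ?thesis using assms by simp
qed

theorem theorem3p3:
  fixes m n1 n2 :: nat and M :: "nat \<Rightarrow> nat \<Rightarrow> int"
  assumes "m \<ge> 1" and "n1 \<ge> 1" and "n2 \<ge> 1"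
  shows "\<exists>f. f ` mg_vertices m n1 \<subseteq> mg_vertices m (n1 * n2) \<and>
             inj_on f (mg_vertices m n1) \<and>
             (\<forall>x\<in>mg_vertices m n1. \<forall>y\<in>mg_vertices m n1.
                mg_arc m M n1 x y \<longleftrightarrow> mg_arc m M (n1 * n2) (f x) (f y))"
proof (intro exI[of _ "\<lambda>x i. int n2 * x i"] conjI)
  show "(\<lambda>x i. int n2 * x i) ` mg_vertices m n1 \<subseteq> mg_vertices m (n1 * n2)"
  proof
    fix z assume "z \<in> (\<lambda>x i. int n2 * x i) ` mg_vertices m n1"
    then obtain x where x: "x \<in> mg_vertices m n1" and z: "z = (\<lambda>i. int n2 * x i)" by auto
    have "\<And>i. i < m \<Longrightarrow> int n2 * x i < int (n1 * n2)"
    proof -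
      fix i assume "i < m"
      then have "x i < int n1" using x by (auto simp: mg_vertices_def)
      then have "int n2 * x i < int n2 * int n1" by (rule mult_strict_left_mono) (use assms(3) in simp)
      then show "int n2 * x i < int (n1 * n2)" by (simp add: algebra_simps)
    qed
    then show "z \<in> mg_vertices m (n1 * n2)" using x z by (auto simp: mg_vertices_def)
  qed
  show "inj_on (\<lambda>x i. int n2 * x i) (mg_vertices m n1)"
    using assms(3) by (auto simp: inj_on_def fun_eq_iff)
  show "\<forall>x\<in>mg_vertices m n1. \<forall>y\<in>mg_vertices m n1.
                mg_arc m M n1 x y \<longleftrightarrow> mg_arc m M (n1 * n2) (\<lambda>i. int n2 * x i) (\<lambda>i. int n2 * y i)"
  proof (intro ballI)
    fix x y assume x: "x \<in> mg_vertices m n1" and y: "y \<in> mg_vertices m n1"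
    have img: "(\<lambda>i. int n2 * w i) \<in> mg_vertices m (n1 * n2)" if "w \<in> mg_vertices m n1" for w
      using \<open>(\<lambda>x i. int n2 * x i) ` mg_vertices m n1 \<subseteq> mg_vertices m (n1 * n2)\<close> that by auto
    have s: "(\<Sum>j<m. M i j * (int n2 * x j)) = int n2 * (\<Sum>j<m. M i j * x j)" for i
      by (simp add: sum_distrib_left algebra_simps)
    show "mg_arc m M n1 x y \<longleftrightarrow> mg_arc m M (n1 * n2) (\<lambda>i. int n2 * x i) (\<lambda>i. int n2 * y i)"
      unfolding mg_arc_def using x y img[OF x] img[OF y] key[OF assms(3)] s by simp
  qed
qed

end
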